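(* Let $n$ be a positive integer and let $c\geq 2$ be an integer whose smallest prime factor $p_1$ satisfies $p_1>(n+1)^2/4$. Then there is no arithmetical structure $(r_1,\dots,r_n)$ on $K_n$ with $r_1=c$.
   Context: An arithmetical structure on the complete graph $K_n$ is an $n$-tuple $(r_1,r_2,\dots,r_n)$ of positive integers with $\gcd(r_1,\dots,r_n)=1$ such that $r_j$ divides $\sum_{i=1}^n r_i$ for every $j$. The entries are always listed so that $r_1\geq r_2\geq\dots\geq r_n$; thus $r_1$ is the largest value of the structure. *)

theory Defs
  imports Complex_Main "HOL-Computational_Algebra.Primes"
begin

text \<open>An arithmetical structure on the complete graph K_n, given as a list
  r = [r_1, ..., r_n] (r_1 = r ! 0) of positive integers listed in
  non-increasing order, with gcd 1, each entry dividing the total sum.\<close>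
definition arith_struct_Kn :: "nat \<Rightarrow> nat list \<Rightarrow> bool" where
  "arith_struct_Kn n r \<longleftrightarrow>
     length r = n \<and>
     (\<forall>i<n. 0 < r ! i) \<and>
     sorted_wrt (\<ge>) r \<and>
     Gcd (set r) = 1 \<and>
     (\<forall>j<n. r ! j dvd sum_list r)"

definition smallest_prime_factor :: "nat \<Rightarrow> nat" where
  "smallest_prime_factor c = Min (prime_factors c)"

end

theory Submission
  imports Defs
begin

lemma spf_le:
  assumes "2 \<le> c" "e dvd c" "1 < e"
  shows "smallest_prime_factor c \<le> e"
proof -
  obtain q where q: "prime q" "q dvd e" using prime_factor_nat[of e] assms by auto
  have "q dvd c" using q assms dvd_trans by blast
  hence "q \<in> prime_factors c" using q assms by (auto simp: in_prime_factors_iff)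
  hence "Min (prime_factors c) \<le> q" by simp
  moreover have "q \<le> e" using q assms dvd_imp_le by auto
  ultimately show ?thesis unfolding smallest_prime_factor_def by simp
qed

lemma key:
  fixes x c k :: nat
  assumes "2 \<le> c" "0 < x" "x < c" "x dvd k * c" "0 < k"
  shows "smallest_prime_factor c * x \<le> k * c"
proof -
  obtain d where d: "k * c = x * d" using assms by (auto elim: dvdE)
  define g where "g = gcd c x"
  have gpos: "0 < g" using assms g_def by simp
  obtain c' where c': "c = g * c'" using g_def by (metis gcd_dvd1 dvdE)
  obtain x' where x': "x = g * x'" using g_def by (metis gcd_dvd2 dvdE)
  have cop: "coprime c' x'"
    using c' x' g_def gpos assms
    by (metis div_gcd_coprime gcd_eq_0_iff nonzero_mult_div_cancel_left not_gr0)
  have "g * (k * c') = g * (x' * d)" using d c' x' by (simp add: ac_simps)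
  hence "k * c' = x' * d" using gpos by simp
  hence "c' dvd x' * d" by (metis dvd_triv_right)
  hence cd: "c' dvd d" using cop coprime_dvd_mult_right_iff by blast
  have "g \<le> x" using g_def assms by (simp add: gcd_le2_nat)
  hence "1 < c'" using c' assms gpos by (metis less_le_trans mult.right_neutral not_less_eq not_less_iff_gr_or_eq less_one nat_mult_less_cancel1 mult_0_right le_less_trans)
  have "c' dvd c" using c' by simp
  have "smallest_prime_factor c \<le> c'" using spf_le \<open>1 < c'\<close> \<open>c' dvd c\<close> assms by blast
  also have "0 < d" using assms d by (metis mult_is_0 not_gr0 not_numeral_le_zero)
  hence "c' \<le> d" using cd by (simp add: dvd_imp_le)
  finally have "smallest_prime_factor c * x \<le> d * x" by simp
  thus ?thesis using d by (simp add: ac_simps)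
qed

theorem theorem3p1:
  fixes n c :: nat
  assumes "0 < n"
    and "2 \<le> c"
    and "real (smallest_prime_factor c) > real ((n + 1)^2) / 4"
  shows "\<not> (\<exists>r. arith_struct_Kn n r \<and> r ! 0 = c)"
proof
  assume "\<exists>r. arith_struct_Kn n r \<and> r ! 0 = c"
  then obtain r where ar: "arith_struct_Kn n r" and r0: "r ! 0 = c" by blast
  define p where "p = smallest_prime_factor c"
  have len: "length r = n" and pos: "\<And>i. i < n \<Longrightarrow> 0 < r ! i"
    and srt: "sorted_wrt (\<ge>) r" and gcd1: "Gcd (set r) = 1"
    and dv: "\<And>j. j < n \<Longrightarrow> r ! j dvd sum_list r"
    using ar unfolding arith_struct_Kn_def by auto
  define S where "S = sum_list r"
  have Ssum: "S = (\<Sum>i<n. r ! i)" unfolding S_def using len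
    by (simp add: sum_list_sum_nth atLeast0LessThan)
  have le_c: "r ! i \<le> c" if "i < n" for i
  proof (cases "i = 0")
    case True thus ?thesis using r0 by simp
  next
    case False thus ?thesis using sorted_wrt_nth_less[OF srt, of 0 i] that len r0 by simp
  qed
  have "c dvd S" using dv[of 0] assms(1) r0 S_def by simp
  then obtain k where Sk: "S = c * k" by (elim dvdE)
  define A where "A = {i. i < n \<and> r ! i = c}"
  define B where "B = {i. i < n \<and> r ! i < c}"
  have AB: "{..<n} = A \<union> B" "A \<inter> B = {}" using le_c unfolding A_def B_def
    by (auto simp: order.order_iff_strict)
  have finA: "finite A" and finB: "finite B" unfolding A_def B_def by auto
  have Bne: "B \<noteq> {}"
  proof
    assume "B = {}"
    hence "\<forall>i<n. r ! i = c" using AB unfolding A_def by auto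
    hence "set r = {c}" using len assms(1) by (auto simp: in_set_conv_nth) (metis assms(1) len)
    thus False using gcd1 assms(2) by simp
  qed
  define m where "m = card B"
  have "n = card (A \<union> B)" using AB(1) by (metis card_lessThan)
  hence nAm: "n = card A + m"
    using card_Un_disjoint[OF finA finB AB(2)] unfolding m_def by simp
  hence cardA: "card A = n - m" by simp
  have mpos: "0 < m" using Bne finB m_def by (simp add: card_gt_0_iff)
  have mle: "m \<le> n" using nAm by simp
  have "S = (\<Sum>i\<in>A. r ! i) + (\<Sum>i\<in>B. r ! i)"
    using Ssum AB sum.union_disjoint[OF finA finB AB(2)] by simp
  also have "(\<Sum>i\<in>A. r ! i) = (n - m) * c" using cardA unfolding A_def by simp
  finally have S2: "S = (n - m) * c + (\<Sum>i\<in>B. r ! i)" .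
  have "c \<le> S" using Ssum r0 assms(1)
    by (metis finite_lessThan lessThan_iff member_le_sum zero_le)
  hence kpos: "0 < k" using Sk assms(2) by (cases k) auto
  have bnd: "p * r ! i \<le> k * c" if "i \<in> B" for i
  proof -
    have "r ! i dvd k * c" using dv[of i] that Sk S_def unfolding B_def by (simp add: ac_simps)
    thus ?thesis using key[of c "r ! i" k] that assms(2) pos kpos unfolding B_def p_def by auto
  qed
  have "p * (\<Sum>i\<in>B. r ! i) = (\<Sum>i\<in>B. p * r ! i)" by (simp add: sum_distrib_left)
  also have "\<dots> \<le> (\<Sum>i\<in>B. k * c)" by (rule sum_mono) (rule bnd)
  also have "\<dots> = m * k * c" using m_def by simp
  finally have pB: "p * (\<Sum>i\<in>B. r ! i) \<le> m * k * c" .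
  obtain b where b: "b \<in> B" using Bne by auto
  have "0 < r ! b" using pos b unfolding B_def by simp
  hence "0 < (\<Sum>i\<in>B. r ! i)" using b finB
    by (metis member_le_sum not_gr0 le_0_eq zero_le)
  hence "(n - m) * c < c * k" using S2 Sk by simp
  hence klt: "n - m < k" using assms(2) by (simp add: mult.commute)
  have "p * (c * k) \<le> p * ((n - m) * c) + m * k * c" using S2 Sk pB
    by (simp add: add_mult_distrib2)
  hence "c * (p * k) \<le> c * (p * (n - m) + m * k)" by (simp add: algebra_simps)
  hence ineq: "p * k \<le> p * (n - m) + m * k" using assms(2) by simp
  define a where "a = k - (n - m)"
  have apos: "1 \<le> a" and ka: "k = a + (n - m)" using klt a_def by auto
  have "p * a \<le> m * a + m * (n - m)" using ineq ka by (simp add: algebra_simps)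
  also have "\<dots> \<le> m * a + m * (n - m) * a" using apos by simp
  finally have "p * a \<le> (m + m * (n - m)) * a" by (simp add: algebra_simps)
  hence pl: "p \<le> m + m * (n - m)" using apos by simp
  have "real p \<le> real m + real m * (real n - real m)" proof -
    have "real (m * (n - m)) = real m * (real n - real m)" using mle by (simp add: of_nat_diff)
    thus ?thesis using pl by (metis of_nat_add of_nat_le_iff)
  qed
  also have "\<dots> \<le> (real n + 1)^2 / 4"
  proof -
    have "(real n + 1)^2/4 - (real m + real m * (real n - real m)) = (real n + 1 - 2*real m)^2/4"
      by (simp add: power2_eq_square field_simps)
    moreover have "0 \<le> (real n + 1 - 2*real m)^2/4" by simp
    ultimately show ?thesis by linarith
  qed
  finally show False using assms(3) unfolding p_def by (simp add: add.commute)
qed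

end
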